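(* Let $\mathcal{S}\subset\mathbb{R}^n$ be compact convex, and let $f_1,\dots,f_T:\mathcal{S}\to\mathbb{R}$ be differentiable, $\ell$-strongly convex and $u$-smooth (i.e. $\nabla f_t$ is $u$-Lipschitz) with $\|\nabla f_t(x)\|\le G$ on $\mathcal{S}$. Let $\theta_1\in\mathcal{S}$ and $$\theta_{t+1}=\operatorname{argmin}_{\theta\in\mathcal{S}}\big\|\theta-(\theta_t-\eta_t\nabla f_t(\theta_t))\big\|^2,\qquad \eta_t=\frac{1-\gamma}{\ell(\gamma-\gamma^t)+u(1-\gamma)},$$ with $1-\gamma=1/T^\beta$, $\beta\in(0,1)$. Let $\theta_t^*=\operatorname{argmin}_{\theta\in\mathcal{S}}f_t(\theta)$ and $V^*=\sum_{t=2}^T\|\theta_t^*-\theta_{t-1}^*\|$. Then $$\sum_{t=1}^T\big(f_t(\theta_t)-f_t(\theta_t^* )\big)\le G\big(2(T^\beta-1)+u/\ell\big)\big(\|\theta_1-\theta_1^*\|+V^*\big).$$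
   Context: $\ell$-strongly convex: $f(y)\ge f(x)+\nabla f(x)^\top(y-x)+\frac\ell2\|x-y\|^2$ for all $x,y\in\mathcal{S}$. *)

theory Defs
  imports "HOL-Analysis.Analysis"
begin

end

theory Submission
  imports Defs
begin

lemma nsq_add0: "(norm (x + y))\<^sup>2 = (norm x)\<^sup>2 + (norm y)\<^sup>2 + 2 * (x \<bullet> (y::'a::real_inner))"
  by (simp add: power2_norm_eq_inner inner_add_left inner_add_right inner_commute)
lemma nsq_comb: "(norm (a *\<^sub>R d - b *\<^sub>R (p::'a::real_inner)))\<^sup>2 = a\<^sup>2 * (norm d)\<^sup>2 - 2 * a * b * (p \<bullet> d) + b\<^sup>2 * (norm p)\<^sup>2"
proof -
  have "a *\<^sub>R d - b *\<^sub>R p = a *\<^sub>R d + (- b) *\<^sub>R p" by simp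
  then have "(norm (a *\<^sub>R d - b *\<^sub>R p))\<^sup>2 = (norm (a *\<^sub>R d))\<^sup>2 + (norm ((- b) *\<^sub>R p))\<^sup>2 + 2 * ((a *\<^sub>R d) \<bullet> ((- b) *\<^sub>R p))"
    by (simp only: nsq_add0)
  also have "\<dots> = a\<^sup>2 * (norm d)\<^sup>2 - 2 * a * b * (p \<bullet> d) + b\<^sup>2 * (norm p)\<^sup>2"
    by (simp add: power_mult_distrib inner_commute)
  finally show ?thesis .
qed

lemma sum_split1: "(\<Sum>t=1..Suc n. F t) = F 1 + (\<Sum>t=1..n. F (Suc t))"
  by (induction n) (auto simp: add.assoc)

lemma sum_split2: "(\<Sum>t=2..Suc n. F t) = (\<Sum>t=1..n. F (Suc t))"
  by (induction n) auto

locale scs =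
  fixes S :: "'a::euclidean_space set" and h :: "'a \<Rightarrow> real" and g :: "'a \<Rightarrow> 'a"
    and l u :: real
  assumes cvx: "convex S"
    and diff: "\<And>x. x \<in> S \<Longrightarrow> (h has_derivative (\<lambda>v. g x \<bullet> v)) (at x)"
    and strong: "\<And>x y. x \<in> S \<Longrightarrow> y \<in> S \<Longrightarrow> h y \<ge> h x + g x \<bullet> (y - x) + l / 2 * (norm (x - y))\<^sup>2"
    and lips: "\<And>x y. x \<in> S \<Longrightarrow> y \<in> S \<Longrightarrow> norm (g x - g y) \<le> u * norm (x - y)"
begin

lemma seg_in: "x \<in> S \<Longrightarrow> y \<in> S \<Longrightarrow> 0 \<le> s \<Longrightarrow> s \<le> 1 \<Longrightarrow> x + s *\<^sub>R (y - x) \<in> S"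
  using convexD_alt[OF cvx, of x y s] by (simp add: algebra_simps)

lemma descent:
  assumes x: "x \<in> S" and y: "y \<in> S"
  shows "h y \<le> h x + g x \<bullet> (y - x) + u / 2 * (norm (y - x))\<^sup>2"
proof -
  define d where "d = y - x"
  define k where "k = (\<lambda>s. h (x + s *\<^sub>R d) - s * (g x \<bullet> d) - u / 2 * s^2 * (norm d)\<^sup>2)"
  have "k 1 \<le> k 0"
  proof (rule DERIV_nonpos_imp_nonincreasing[of 0 1 k])
    fix s :: real assume s: "0 \<le> s" "s \<le> 1"
    have p: "x + s *\<^sub>R d \<in> S" using seg_in[OF x y s] by (simp add: d_def)
    have d1: "((\<lambda>s. x + s *\<^sub>R d) has_derivative (\<lambda>t. t *\<^sub>R d)) (at s)"
      by (auto intro!: derivative_eq_intros)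
    have d2: "((\<lambda>s. h (x + s *\<^sub>R d)) has_derivative (\<lambda>t. g (x + s *\<^sub>R d) \<bullet> (t *\<^sub>R d))) (at s)"
      using has_derivative_compose[OF d1 diff[OF p]] by simp
    have d3: "((\<lambda>s. h (x + s *\<^sub>R d)) has_real_derivative (g (x + s *\<^sub>R d) \<bullet> d)) (at s)"
    proof -
      have e: "(\<lambda>t. g (x + s *\<^sub>R d) \<bullet> (t *\<^sub>R d)) = (*) (g (x + s *\<^sub>R d) \<bullet> d)"
        by (rule ext) simp
      show ?thesis unfolding has_field_derivative_def using d2 unfolding e .
    qed
    have "(k has_real_derivative (g (x + s *\<^sub>R d) \<bullet> d - g x \<bullet> d - u * s * (norm d)\<^sup>2)) (at s)"
      unfolding k_def by (auto intro!: derivative_eq_intros d3)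
    moreover have "g (x + s *\<^sub>R d) \<bullet> d - g x \<bullet> d - u * s * (norm d)\<^sup>2 \<le> 0"
    proof -
      have "g (x + s *\<^sub>R d) \<bullet> d - g x \<bullet> d = (g (x + s *\<^sub>R d) - g x) \<bullet> d" by (simp add: inner_diff_left)
      also have "\<dots> \<le> norm (g (x + s *\<^sub>R d) - g x) * norm d" by (rule norm_cauchy_schwarz)
      also have "\<dots> \<le> u * norm (x + s *\<^sub>R d - x) * norm d"
        by (rule mult_right_mono[OF lips[OF p x]]) simp
      also have "\<dots> = u * s * (norm d)\<^sup>2" using s by (simp add: power2_eq_square)
      finally show ?thesis by simp
    qed
    ultimately show "\<exists>y. (k has_real_derivative y) (at s) \<and> y \<le> 0" by blast
  qed simp
  then show ?thesis by (simp add: k_def d_def algebra_simps)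
qed

lemma optimal:
  assumes xs: "xs \<in> S" and mn: "\<forall>y\<in>S. h xs \<le> h y" and y: "y \<in> S"
  shows "g xs \<bullet> (y - xs) \<ge> 0"
proof (rule ccontr)
  define A where "A = g xs \<bullet> (y - xs)"
  define B where "B = u / 2 * (norm (y - xs))\<^sup>2"
  assume "\<not> ?thesis" then have A: "A < 0" by (simp add: A_def)
  have key: "0 \<le> A + s * B" if s: "0 < s" "s \<le> 1" for s
  proof -
    have p: "xs + s *\<^sub>R (y - xs) \<in> S" using seg_in[OF xs y] s by simp
    have "h xs \<le> h (xs + s *\<^sub>R (y - xs))" using mn p by blast
    also have "\<dots> \<le> h xs + g xs \<bullet> (s *\<^sub>R (y - xs)) + u / 2 * (norm (s *\<^sub>R (y - xs)))\<^sup>2"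
      using descent[OF xs p] by simp
    also have "norm (s *\<^sub>R (y - xs)) = s * norm (y - xs)" using s by simp
    finally have "0 \<le> s * A + s * (s * B)" using s
      by (simp add: A_def B_def power2_eq_square algebra_simps)
    then have "0 \<le> s * (A + s * B)" by (simp add: algebra_simps)
    then show ?thesis using s by (simp add: zero_le_mult_iff)
  qed
  show False
  proof (cases "B \<le> 0")
    case True then show ?thesis using key[of 1] A by simp
  next
    case False
    define s where "s = min 1 (- A / (2 * B))"
    have s: "0 < s" "s \<le> 1" using A False by (auto simp: s_def field_simps)
    have "s \<le> - A / (2 * B)" by (simp add: s_def)
    then have "s * B \<le> (- A / (2 * B)) * B" using False by (intro mult_right_mono) auto
    then have "s * B \<le> - A / 2" using False by simp
    then show ?thesis using key[OF s] A by simp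
  qed
qed

end

locale scs2 = scs +
  fixes c :: "'a::euclidean_space"
  assumes clo: "closed S" and lu: "l \<le> u" and lpos: "0 < l" and c: "c \<in> rel_interior S"
begin

lemma nsq_add: "(norm (x + y))\<^sup>2 = (norm x)\<^sup>2 + (norm y)\<^sup>2 + 2 * (x \<bullet> y)"
  by (simp add: power2_norm_eq_inner inner_add_left inner_add_right inner_commute)

definition V where "V = span ((\<lambda>x. - c + x) ` S)"
definition P where "P = closest_point V"

lemma subV: "subspace V" unfolding V_def by simp
lemma cS: "c \<in> S" using c rel_interior_subset by blast
lemma Sne: "S \<noteq> {}" using cS by blast

lemma P_in: "P v \<in> V"
  unfolding P_def using closest_point_in_set[of V v] closed_subspace[OF subV] subspace_0[OF subV] by auto

lemma P_orth: assumes z: "z \<in> V" shows "(v - P v) \<bullet> z = 0"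
proof -
  have cv: "convex V" "closed V" using subspace_imp_convex[OF subV] closed_subspace[OF subV] by auto
  have a1: "P v + z \<in> V" using subspace_add[OF subV P_in z] .
  have a2: "P v - z \<in> V" using subspace_diff[OF subV P_in z] .
  have "(v - P v) \<bullet> (P v + z - P v) \<le> 0" "(v - P v) \<bullet> (P v - z - P v) \<le> 0"
    using closest_point_dot[OF cv a1, of v] closest_point_dot[OF cv a2, of v] unfolding P_def by auto
  then show ?thesis by simp
qed

lemma P_inner: "z \<in> V \<Longrightarrow> P v \<bullet> z = v \<bullet> z"
  using P_orth[of z v] by (simp add: inner_diff_left)

lemma P_uniq: assumes p: "p \<in> V" and o: "\<And>z. z \<in> V \<Longrightarrow> (a - p) \<bullet> z = 0"
  shows "P a = p"
proof -
  have cv: "convex V" "closed V" using subspace_imp_convex[OF subV] closed_subspace[OF subV] by auto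
  have le: "\<forall>z\<in>V. dist a p \<le> dist a z"
  proof
    fix z assume z: "z \<in> V"
    have "p - z \<in> V" using p z subV by (simp add: subspace_diff)
    then have o2: "(a - p) \<bullet> (p - z) = 0" using o by blast
    have "(dist a z)\<^sup>2 = (norm ((a - p) + (p - z)))\<^sup>2" by (simp add: dist_norm)
    also have "\<dots> = (norm (a - p))\<^sup>2 + (norm (p - z))\<^sup>2 + 2 * ((a - p) \<bullet> (p - z))"
      by (rule nsq_add)
    finally have "(dist a p)\<^sup>2 \<le> (dist a z)\<^sup>2" using o2 by (simp add: dist_norm)
    then show "dist a p \<le> dist a z" by (rule power2_le_imp_le) simp
  qed
  show ?thesis unfolding P_def using closest_point_unique[OF cv p le] by simp
qed

lemma P_self: "v \<in> V \<Longrightarrow> P v = v"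
  by (rule P_uniq) auto

lemma P_add: "P (a + b) = P a + P b"
proof (rule P_uniq)
  show "P a + P b \<in> V" using subspace_add[OF subV P_in P_in] .
  fix z assume z: "z \<in> V"
  have "a + b - (P a + P b) = (a - P a) + (b - P b)" by simp
  then have "(a + b - (P a + P b)) \<bullet> z = (a - P a) \<bullet> z + (b - P b) \<bullet> z" by (simp only: inner_add_left)
  then show "(a + b - (P a + P b)) \<bullet> z = 0" using P_orth[OF z, of a] P_orth[OF z, of b] by simp
qed

lemma P_scale: "P (r *\<^sub>R a) = r *\<^sub>R P a"
proof (rule P_uniq)
  show "r *\<^sub>R P a \<in> V" using subspace_scale[OF subV P_in] .
  fix z assume z: "z \<in> V"
  have "r *\<^sub>R a - r *\<^sub>R P a = r *\<^sub>R (a - P a)" by (simp add: scaleR_diff_right)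
  then have "(r *\<^sub>R a - r *\<^sub>R P a) \<bullet> z = r * ((a - P a) \<bullet> z)" by simp
  then show "(r *\<^sub>R a - r *\<^sub>R P a) \<bullet> z = 0" using P_orth[OF z, of a] by simp
qed

lemma P_linear: "linear P"
  by (rule linearI) (simp_all add: P_add P_scale)

lemma P_diff: "P (a - b) = P a - P b"
  using linear_diff[OF P_linear] .

lemma P_sum: "P (sum f A) = sum (\<lambda>i. P (f i)) A"
  using linear_sum[OF P_linear] .

lemma P_sq: "(norm (P v))\<^sup>2 = P v \<bullet> v"
  using P_inner[OF P_in, of v v] by (simp add: power2_norm_eq_inner inner_commute)

lemma P_norm: "norm (P v) \<le> norm v"
proof -
  have h: "(norm (P v))\<^sup>2 \<le> norm (P v) * norm v" using P_sq norm_cauchy_schwarz[of "P v" v] by simp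
  show ?thesis
  proof (cases "norm (P v) = 0")
    case False
    then have "norm (P v) > 0" by simp
    with h show ?thesis by (simp add: power2_eq_square)
  qed simp
qed

lemma diffV: "x \<in> S \<Longrightarrow> y \<in> S \<Longrightarrow> x - y \<in> V"
proof -
  assume "x \<in> S" "y \<in> S"
  then have "- c + x \<in> V" "- c + y \<in> V" unfolding V_def by (auto intro: span_base)
  then have "(- c + x) - (- c + y) \<in> V" using subspace_diff[OF subV] by blast
  then show ?thesis by simp
qed

definition good where "good q r \<longleftrightarrow> q \<in> S \<and> r > 0 \<and> (\<forall>v\<in>V. norm v < r \<longrightarrow> q + v \<in> S)"

lemma c_good: "\<exists>r. good c r"
proof -
  obtain e where e: "e > 0" "ball c e \<inter> affine hull S \<subseteq> S" using c mem_rel_interior_ball by blast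
  have "c + v \<in> S" if "v \<in> V" "norm v < e" for v
  proof -
    have "c \<in> affine hull S" by (rule hull_inc[OF cS])
    then have eqA: "affine hull S = (\<lambda>x. c + x) ` V" using affine_hull_span_gen[of c S] unfolding V_def by simp
    have "c + v \<in> affine hull S" unfolding eqA using that(1) by (rule imageI)
    moreover have "c + v \<in> ball c e" using that by (simp add: dist_norm)
    ultimately show ?thesis using e by blast
  qed
  then show ?thesis using e cS unfolding good_def by blast
qed

lemma good_shrink:
  assumes x: "x \<in> S" and gc: "good c r" and s: "0 < s" "s \<le> 1"
  shows "good (x + s *\<^sub>R (c - x)) (s * r)"
  unfolding good_def
proof (intro conjI ballI impI)
  show "x + s *\<^sub>R (c - x) \<in> S" using seg_in[OF x cS] s by simp
  show "0 < s * r" using gc s unfolding good_def by simp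
  fix v assume v: "v \<in> V" "norm v < s * r"
  have "(1/s) *\<^sub>R v \<in> V" using v subV by (simp add: subspace_scale)
  moreover have "norm ((1/s) *\<^sub>R v) < r" using v s by (simp add: field_simps)
  ultimately have cv: "c + (1/s) *\<^sub>R v \<in> S" using gc unfolding good_def by blast
  have eq: "x + s *\<^sub>R (c - x) + v = x + s *\<^sub>R ((c + (1/s) *\<^sub>R v) - x)"
    using s by (simp add: algebra_simps)
  have m: "x + s *\<^sub>R ((c + (1/s) *\<^sub>R v) - x) \<in> S" using seg_in[OF x cv] s by simp
  show "x + s *\<^sub>R (c - x) + v \<in> S" using m by (simp only: eq)
qed

lemma good_seg:
  assumes p: "good p r" and q: "good q r" and s: "0 \<le> s" "s \<le> 1"
  shows "good (p + s *\<^sub>R (q - p)) r"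
  unfolding good_def
proof (intro conjI ballI impI)
  show "p + s *\<^sub>R (q - p) \<in> S" using seg_in[of p q s] p q s unfolding good_def by simp
  show "0 < r" using p unfolding good_def by simp
  fix v assume v: "v \<in> V" "norm v < r"
  then have pv: "p + v \<in> S" and qv: "q + v \<in> S" using p q unfolding good_def by blast+
  have eq: "p + s *\<^sub>R (q - p) + v = (p + v) + s *\<^sub>R ((q + v) - (p + v))" by (simp add: algebra_simps)
  have m: "(p + v) + s *\<^sub>R ((q + v) - (p + v)) \<in> S" using seg_in[OF pv qv s] .
  show "p + s *\<^sub>R (q - p) + v \<in> S" using m by (simp only: eq)
qed


definition phi where "phi z = h z - l / 2 * (norm z)\<^sup>2"
definition dphi where "dphi z = g z - l *\<^sub>R z"

lemma expand_sq: "(norm z)\<^sup>2 = (norm y)\<^sup>2 + (norm (z - y))\<^sup>2 + 2 * (y \<bullet> (z - y))"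
  using nsq_add[of y "z - y"] by simp

lemma dphi_inner: "dphi y \<bullet> v = g y \<bullet> v - l * (y \<bullet> v)"
  by (simp add: dphi_def inner_diff_left)

lemma phi_conv: assumes y: "y \<in> S" and z: "z \<in> S"
  shows "phi z \<ge> phi y + dphi y \<bullet> (z - y)"
proof -
  have s: "h z \<ge> h y + g y \<bullet> (z - y) + l / 2 * (norm (z - y))\<^sup>2"
    using strong[OF y z] by (simp add: norm_minus_commute)
  have e: "l / 2 * (norm z)\<^sup>2 = l / 2 * (norm y)\<^sup>2 + l / 2 * (norm (z - y))\<^sup>2 + l * (y \<bullet> (z - y))"
    using arg_cong[OF expand_sq[of z y], of "\<lambda>t. l / 2 * t"] by (simp add: algebra_simps)
  have e2: "(u - l) / 2 * (norm (z - y))\<^sup>2 = u / 2 * (norm (z - y))\<^sup>2 - l / 2 * (norm (z - y))\<^sup>2"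
    by (simp only: diff_divide_distrib left_diff_distrib)
  show ?thesis unfolding phi_def dphi_inner using s e e2 by linarith
qed

lemma phi_desc: assumes y: "y \<in> S" and z: "z \<in> S"
  shows "phi z \<le> phi y + dphi y \<bullet> (z - y) + (u - l) / 2 * (norm (z - y))\<^sup>2"
proof -
  have s: "h z \<le> h y + g y \<bullet> (z - y) + u / 2 * (norm (z - y))\<^sup>2"
    using descent[OF y z] by simp
  have e: "l / 2 * (norm z)\<^sup>2 = l / 2 * (norm y)\<^sup>2 + l / 2 * (norm (z - y))\<^sup>2 + l * (y \<bullet> (z - y))"
    using arg_cong[OF expand_sq[of z y], of "\<lambda>t. l / 2 * t"] by (simp add: algebra_simps)
  have e2: "(u - l) / 2 * (norm (z - y))\<^sup>2 = u / 2 * (norm (z - y))\<^sup>2 - l / 2 * (norm (z - y))\<^sup>2"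
    by (simp only: diff_divide_distrib left_diff_distrib)
  show ?thesis unfolding phi_def dphi_inner using s e e2 by linarith
qed


lemma cocoercive_local:
  assumes p: "p \<in> S" and q: "q \<in> S" and L: "L > 0" "u - l \<le> L"
    and z1: "q - (1 / L) *\<^sub>R P (dphi q - dphi p) \<in> S"
    and z2: "p + (1 / L) *\<^sub>R P (dphi q - dphi p) \<in> S"
  shows "(norm (P (dphi q - dphi p)))\<^sup>2 \<le> L * ((dphi q - dphi p) \<bullet> (q - p))"
proof -
  define w where "w = dphi q - dphi p"
  define cv where "cv = P w"
  define N where "N = (norm cv)\<^sup>2"
  define k where "k = 1 / L"
  define Dp where "Dp = dphi p \<bullet> cv"
  define Dq where "Dq = dphi q \<bullet> cv"
  define A where "A = dphi p \<bullet> (q - p)"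
  define B where "B = dphi q \<bullet> (q - p)"
  have k: "k > 0" "L * k = 1" using L by (auto simp: k_def)
  have WN: "Dq - Dp = N"
  proof -
    have 1: "Dq - Dp = w \<bullet> cv" unfolding Dq_def Dp_def w_def by (simp add: inner_diff_left)
    have 2: "N = cv \<bullet> w" unfolding N_def cv_def by (rule P_sq)
    show ?thesis using 1 2 inner_commute[of w cv] by simp
  qed
  have kWN: "k * Dq - k * Dp = k * N" using WN by (simp add: algebra_simps)
  have nz: "(norm (k *\<^sub>R cv))\<^sup>2 = k * (k * N)" using k by (simp add: N_def power2_eq_square)
  have nzb: "(u - l) / 2 * (k * (k * N)) \<le> k * N / 2"
  proof -
    have "(u - l) * (k * (k * N)) \<le> L * (k * (k * N))"
      using L k by (intro mult_right_mono) (auto simp: N_def)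
    also have "\<dots> = k * N" using k by (simp add: algebra_simps)
    finally show ?thesis by simp
  qed
  have z1': "q - k *\<^sub>R cv \<in> S" using z1 by (simp add: k_def cv_def w_def)
  have z2': "p + k *\<^sub>R cv \<in> S" using z2 by (simp add: k_def cv_def w_def)
  have a: "phi (q - k *\<^sub>R cv) \<ge> phi p + (A - k * Dp)"
    using phi_conv[OF p z1'] unfolding A_def Dp_def
    by (simp add: inner_diff_right algebra_simps)
  have b: "phi (q - k *\<^sub>R cv) \<le> phi q - k * Dq + k * N / 2"
    using phi_desc[OF q z1'] nz nzb unfolding Dq_def
    by (simp add: inner_diff_right)
  have c: "phi (p + k *\<^sub>R cv) \<ge> phi q + (- B + k * Dq)"
  proof -
    have "dphi q \<bullet> (p + k *\<^sub>R cv - q) = - B + k * Dq"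
      unfolding B_def Dq_def by (simp add: inner_diff_right inner_add_right algebra_simps)
    then show ?thesis using phi_conv[OF q z2'] by simp
  qed
  have d: "phi (p + k *\<^sub>R cv) \<le> phi p + k * Dp + k * N / 2"
    using phi_desc[OF p z2'] nz nzb unfolding Dp_def
    by simp
  have "k * N \<le> B - A" using a b c d kWN by linarith
  then have "L * (k * N) \<le> L * (B - A)" using L by simp
  then have "N \<le> L * (B - A)" using k by (simp add: mult.assoc[symmetric])
  moreover have "B - A = w \<bullet> (q - p)" unfolding A_def B_def w_def by (simp add: inner_diff_left)
  ultimately show ?thesis unfolding N_def cv_def w_def by simp
qed


lemma dphi_lip: "a \<in> S \<Longrightarrow> b \<in> S \<Longrightarrow> norm (dphi a - dphi b) \<le> (u + l) * norm (a - b)"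
proof -
  assume a: "a \<in> S" and b: "b \<in> S"
  have "dphi a - dphi b = (g a - g b) - l *\<^sub>R (a - b)" by (simp add: dphi_def algebra_simps)
  then have "norm (dphi a - dphi b) = norm ((g a - g b) - l *\<^sub>R (a - b))" by simp
  also have "\<dots> \<le> norm (g a - g b) + norm (l *\<^sub>R (a - b))" by (rule norm_triangle_ineq4)
  also have "\<dots> \<le> u * norm (a - b) + l * norm (a - b)" using lips[OF a b] lpos by simp
  finally show ?thesis by (simp add: algebra_simps)
qed

lemma sum_norm_sq: "(norm (\<Sum>i<n. f i))\<^sup>2 \<le> real n * (\<Sum>i<n. (norm (f i))\<^sup>2)"
proof -
  have "norm (\<Sum>i<n. f i) \<le> (\<Sum>i<n. norm (f i))" by (rule norm_sum)
  then have "(norm (\<Sum>i<n. f i))\<^sup>2 \<le> (\<Sum>i<n. norm (f i))\<^sup>2"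
    by (intro power_mono) auto
  also have "\<dots> \<le> (\<Sum>i<n. (norm (f i))\<^sup>2) * card {..<n}" by (rule sum_squared_le_sum_of_squares)
  finally show ?thesis by (simp add: mult.commute)
qed

lemma cocoercive_good:
  assumes gx: "good x r" and gy: "good y r" and L: "L > 0" "u - l \<le> L"
  shows "(norm (P (dphi y - dphi x)))\<^sup>2 \<le> L * ((dphi y - dphi x) \<bullet> (y - x))"
proof -
  have r: "r > 0" using gx unfolding good_def by simp
  obtain n :: nat where n: "(u + l) * norm (y - x) / (L * r) < real n"
    using reals_Archimedean2 by blast
  have n0: "n > 0"
  proof -
    have "0 \<le> (u + l) * norm (y - x) / (L * r)" using lu lpos L r by simp
    then show ?thesis using n by linarith
  qed
  define pt where "pt i = x + (real i / real n) *\<^sub>R (y - x)" for i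
  have gpt: "good (pt i) r" if "i \<le> n" for i
    unfolding pt_def using good_seg[OF gx gy, of "real i / real n"] that n0 by simp
  have ptS: "pt i \<in> S" if "i \<le> n" for i using gpt[OF that] unfolding good_def by simp
  have pt0: "pt 0 = x" and ptn: "pt n = y" using n0 by (auto simp: pt_def)
  have ptd: "pt (Suc i) - pt i = (1 / real n) *\<^sub>R (y - x)" for i
  proof -
    have "pt (Suc i) - pt i = (real (Suc i) / real n - real i / real n) *\<^sub>R (y - x)"
      by (simp add: pt_def scaleR_diff_left)
    also have "real (Suc i) / real n - real i / real n = 1 / real n"
      by (simp add: diff_divide_distrib[symmetric])
    finally show ?thesis .
  qed
  define wi where "wi i = dphi (pt (Suc i)) - dphi (pt i)" for i
  have loc: "(norm (P (wi i)))\<^sup>2 \<le> L / real n * (wi i \<bullet> (y - x))" if i: "i < n" for i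
  proof -
    have S1: "pt (Suc i) \<in> S" and S0: "pt i \<in> S" using ptS i by auto
    have "norm ((1 / L) *\<^sub>R P (wi i)) \<le> (1 / L) * norm (wi i)"
      using P_norm[of "wi i"] L by (simp add: divide_right_mono)
    also have "\<dots> \<le> (1 / L) * ((u + l) * norm (pt (Suc i) - pt i))"
      unfolding wi_def using dphi_lip[OF S1 S0] L by (intro mult_left_mono) auto
    also have "\<dots> = (u + l) * norm (y - x) / (L * real n)" unfolding ptd using n0 by simp
    also have "\<dots> < r"
    proof -
      have "(u + l) * norm (y - x) / (L * r) < real n" by (rule n)
      then have "(u + l) * norm (y - x) < real n * (L * r)" using L r by (simp add: field_simps)
      then show ?thesis using L n0 by (simp add: field_simps)
    qed
    finally have sm: "norm ((1 / L) *\<^sub>R P (wi i)) < r" .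
    have inV: "(1 / L) *\<^sub>R P (wi i) \<in> V" using subspace_scale[OF subV P_in] .
    have inV2: "- ((1 / L) *\<^sub>R P (wi i)) \<in> V" using subspace_neg[OF subV inV] .
    have z1: "pt (Suc i) - (1 / L) *\<^sub>R P (wi i) \<in> S"
      using gpt[of "Suc i"] i inV2 sm unfolding good_def by auto
    have z2: "pt i + (1 / L) *\<^sub>R P (wi i) \<in> S"
      using gpt[of i] i inV sm unfolding good_def by auto
    have "(norm (P (wi i)))\<^sup>2 \<le> L * (wi i \<bullet> (pt (Suc i) - pt i))"
      using cocoercive_local[OF S0 S1 L] z1 z2 unfolding wi_def by simp
    also have "\<dots> = L / real n * (wi i \<bullet> (y - x))" unfolding ptd by simp
    finally show ?thesis .
  qed
  have tele: "(\<Sum>i<n. wi i) = dphi y - dphi x"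
    unfolding wi_def using sum_lessThan_telescope[of "\<lambda>i. dphi (pt i)" n] pt0 ptn by simp
  have "(norm (P (dphi y - dphi x)))\<^sup>2 = (norm (\<Sum>i<n. P (wi i)))\<^sup>2"
    unfolding tele[symmetric] P_sum ..
  also have "\<dots> \<le> real n * (\<Sum>i<n. (norm (P (wi i)))\<^sup>2)" by (rule sum_norm_sq)
  also have "\<dots> \<le> real n * (\<Sum>i<n. L / real n * (wi i \<bullet> (y - x)))"
    using loc by (intro mult_left_mono sum_mono) auto
  also have "\<dots> = L * ((\<Sum>i<n. wi i) \<bullet> (y - x))"
  proof -
    have "(\<Sum>i<n. L / real n * (wi i \<bullet> (y - x))) = L / real n * (\<Sum>i<n. wi i \<bullet> (y - x))"
      by (rule sum_distrib_left[symmetric])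
    then show ?thesis using n0 by (simp add: inner_sum_left)
  qed
  finally show ?thesis unfolding tele .
qed


lemma g_cont: "continuous_on S g"
proof -
  have "u-lipschitz_on S g"
    by (rule lipschitz_onI) (use lips lu lpos in \<open>auto simp: dist_norm\<close>)
  then show ?thesis by (rule lipschitz_on_continuous_on)
qed

lemma P_cont: "continuous_on A P"
  unfolding P_def
  by (rule continuous_on_closest_point) (use subspace_imp_convex[OF subV] closed_subspace[OF subV] subspace_0[OF subV] in auto)

lemma cocoercive:
  assumes x: "x \<in> S" and y: "y \<in> S" and L: "L > 0" "u - l \<le> L"
  shows "(norm (P (dphi y - dphi x)))\<^sup>2 \<le> L * ((dphi y - dphi x) \<bullet> (y - x))"
proof -
  obtain r where gc: "good c r" using c_good by blast
  define xs where "xs s = x + s *\<^sub>R (c - x)" for s :: real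
  define ys where "ys s = y + s *\<^sub>R (c - y)" for s :: real
  define Q where "Q s = L * ((dphi (ys s) - dphi (xs s)) \<bullet> (ys s - xs s)) - (norm (P (dphi (ys s) - dphi (xs s))))\<^sup>2" for s
  have pos: "0 \<le> Q s" if s: "s \<in> {0<..1}" for s
  proof -
    have "good (xs s) (s * r)" "good (ys s) (s * r)"
      using good_shrink[OF x gc] good_shrink[OF y gc] s unfolding xs_def ys_def by auto
    from cocoercive_good[OF this L] show ?thesis unfolding Q_def by simp
  qed
  have xsS: "xs ` {0..1} \<subseteq> S" using seg_in[OF x cS] unfolding xs_def by auto
  have ysS: "ys ` {0..1} \<subseteq> S" using seg_in[OF y cS] unfolding ys_def by auto
  have cxs: "continuous_on {0..1} xs" unfolding xs_def by (intro continuous_intros)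
  have cys: "continuous_on {0..1} ys" unfolding ys_def by (intro continuous_intros)
  have gxs: "continuous_on {0..1} (\<lambda>s. g (xs s))" by (rule continuous_on_compose2[OF g_cont cxs xsS])
  have gys: "continuous_on {0..1} (\<lambda>s. g (ys s))" by (rule continuous_on_compose2[OF g_cont cys ysS])
  have cw: "continuous_on {0..1} (\<lambda>s. dphi (ys s) - dphi (xs s))"
    unfolding dphi_def by (intro continuous_intros gxs gys cxs cys)
  have cP: "continuous_on {0..1} (\<lambda>s. P (dphi (ys s) - dphi (xs s)))"
    by (rule continuous_on_compose2[OF P_cont cw]) auto
  have cQ: "continuous_on {0..1} Q"
    unfolding Q_def by (intro continuous_intros cw cP cxs cys)
  have cl: "closed {s \<in> {0..1}. (\<lambda>_. 0) s \<le> Q s}"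
    by (rule continuous_on_closed_Collect_le[OF continuous_on_const cQ]) simp
  have "{0<..1} \<subseteq> {s \<in> {0..1}. (\<lambda>_. 0) s \<le> Q s}" using pos by auto
  then have "closure {0<..(1::real)} \<subseteq> {s \<in> {0..1}. (\<lambda>_. 0) s \<le> Q s}"
    using closure_minimal cl by blast
  then have "(0::real) \<in> {s \<in> {0..1}. (\<lambda>_. 0) s \<le> Q s}" by (rule subsetD) simp
  then have "0 \<le> Q 0" by simp
  then show ?thesis unfolding Q_def xs_def ys_def by simp
qed


lemma dist_sq_le: "(dist (a::'a) b)\<^sup>2 \<le> (dist a z)\<^sup>2 \<Longrightarrow> dist a b \<le> dist a z"
  by (rule power2_le_imp_le) simp_all

lemma cp_shift: assumes x: "x \<in> S"
  shows "closest_point S (x - v) = closest_point S (x - P v)"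
proof -
  define b where "b = x - P v"
  define K where "K = (norm (v - P v))\<^sup>2"
  have eq: "(dist (x - v) z)\<^sup>2 = (dist b z)\<^sup>2 + K" if z: "z \<in> S" for z
  proof -
    have "b - z \<in> V" unfolding b_def
    proof -
      have "x - z - P v \<in> V" using subspace_diff[OF subV diffV[OF x z] P_in] .
      then show "x - P v - z \<in> V" by (simp add: algebra_simps)
    qed
    then have o: "(v - P v) \<bullet> (b - z) = 0" by (rule P_orth)
    have e: "x - v - z = (b - z) + (- (v - P v))" unfolding b_def by simp
    have "(dist (x - v) z)\<^sup>2 = (norm ((b - z) + (- (v - P v))))\<^sup>2" by (simp only: dist_norm e)
    also have "\<dots> = (norm (b - z))\<^sup>2 + K - 2 * ((v - P v) \<bullet> (b - z))"
      unfolding nsq_add K_def by (simp add: norm_minus_commute inner_commute inner_diff_right)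
    finally show ?thesis using o by (simp add: dist_norm)
  qed
  have cpS: "closest_point S b \<in> S" using closest_point_in_set[OF clo Sne] .
  have "\<forall>z\<in>S. dist (x - v) (closest_point S b) \<le> dist (x - v) z"
  proof
    fix z assume z: "z \<in> S"
    have "dist b (closest_point S b) \<le> dist b z" by (rule closest_point_le[OF clo z])
    then have "(dist b (closest_point S b))\<^sup>2 \<le> (dist b z)\<^sup>2" by (intro power_mono) auto
    then show "dist (x - v) (closest_point S b) \<le> dist (x - v) z"
      using eq[OF z] eq[OF cpS] by (intro dist_sq_le) simp
  qed
  then have "closest_point S b = closest_point S (x - v)"
    by (rule closest_point_unique[OF cvx clo cpS])
  then show ?thesis unfolding b_def by simp
qed

lemma fixed:
  assumes xs: "xs \<in> S" and mn: "\<forall>y\<in>S. h xs \<le> h y" and eta: "0 \<le> \<eta>"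
  shows "closest_point S (xs - \<eta> *\<^sub>R g xs) = xs"
proof -
  have "\<forall>z\<in>S. dist (xs - \<eta> *\<^sub>R g xs) xs \<le> dist (xs - \<eta> *\<^sub>R g xs) z"
  proof
    fix z assume z: "z \<in> S"
    have o: "g xs \<bullet> (z - xs) \<ge> 0" by (rule optimal[OF xs mn z])
    have e: "xs - \<eta> *\<^sub>R g xs - z = (xs - z) + (- (\<eta> *\<^sub>R g xs))" by simp
    have "(dist (xs - \<eta> *\<^sub>R g xs) z)\<^sup>2 = (norm ((xs - z) + (- (\<eta> *\<^sub>R g xs))))\<^sup>2"
      by (simp only: dist_norm e)
    also have "\<dots> = (norm (xs - z))\<^sup>2 + (norm (\<eta> *\<^sub>R g xs))\<^sup>2 + 2 * \<eta> * (g xs \<bullet> (z - xs))"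
      unfolding nsq_add by (simp add: inner_diff_left inner_diff_right inner_commute algebra_simps)
    finally have "(dist (xs - \<eta> *\<^sub>R g xs) xs)\<^sup>2 \<le> (dist (xs - \<eta> *\<^sub>R g xs) z)\<^sup>2"
      using o eta by (simp add: dist_norm)
    then show "dist (xs - \<eta> *\<^sub>R g xs) xs \<le> dist (xs - \<eta> *\<^sub>R g xs) z" by (rule dist_sq_le)
  qed
  then show ?thesis using closest_point_unique[OF cvx clo xs] by metis
qed


lemma contraction:
  assumes x: "x \<in> S" and y: "y \<in> S" and eta: "0 < \<eta>" "\<eta> * u \<le> 1"
  shows "norm (closest_point S (x - \<eta> *\<^sub>R g x) - closest_point S (y - \<eta> *\<^sub>R g y))
         \<le> (1 - \<eta> * l) * norm (x - y)"
proof -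
  define d where "d = x - y"
  define w where "w = dphi x - dphi y"
  define N where "N = (norm (P w))\<^sup>2"
  define W where "W = w \<bullet> d"
  have dV: "d \<in> V" unfolding d_def by (rule diffV[OF x y])
  have el: "\<eta> * l \<le> 1" using eta lu lpos by (smt (verit) mult_left_mono)
  have coc: "N \<le> L * W" if "L > 0" "u - l \<le> L" for L
    using cocoercive[OF y x that] unfolding N_def W_def w_def d_def .
  have N0: "0 \<le> N" unfolding N_def by simp
  have key: "\<eta> * N \<le> 2 * (1 - \<eta> * l) * W"
  proof (cases "\<eta> * l < 1")
    case True
    define L where "L = 1 / \<eta> - l"
    have Lp: "L > 0" using True eta by (simp add: L_def field_simps)
    have Lu: "u - l \<le> L" using eta by (simp add: L_def field_simps)
    have c1: "N \<le> L * W" by (rule coc[OF Lp Lu])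
    have W0: "0 \<le> W" using c1 N0 Lp by (smt (verit) mult_pos_neg)
    have "\<eta> * N \<le> \<eta> * (L * W)" using c1 eta by simp
    also have "\<eta> * (L * W) = (1 - \<eta> * l) * W" using eta by (simp add: L_def field_simps)
    also have "\<dots> \<le> 2 * (1 - \<eta> * l) * W" using W0 True by (simp add: mult_right_mono)
    finally show ?thesis .
  next
    case False
    then have el1: "\<eta> * l = 1" using el by simp
    have ul: "u - l \<le> 0"
    proof -
      have "\<eta> * u \<le> \<eta> * l" using eta el1 by simp
      then show ?thesis using eta by simp
    qed
    have "N \<le> 0"
    proof (rule ccontr)
      assume "\<not> N \<le> 0"
      then have Np: "N > 0" by simp
      have "N \<le> 1 * W" using coc[of 1] ul by simp
      then have Wp: "W > 0" using Np by simp
      have q: "N / (2 * W) > 0" using Np Wp by simp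
      have "N \<le> (N / (2 * W)) * W" using coc[OF q] ul q by linarith
      also have "\<dots> = N / 2" using Wp by simp
      finally show False using Np by simp
    qed
    then show ?thesis using el1 N0 by simp
  qed
  have eqx: "closest_point S (x - \<eta> *\<^sub>R g x) = closest_point S (x - \<eta> *\<^sub>R P (g x))"
    using cp_shift[OF x, of "\<eta> *\<^sub>R g x"] by (simp add: P_scale)
  have eqy: "closest_point S (y - \<eta> *\<^sub>R g y) = closest_point S (y - \<eta> *\<^sub>R P (g y))"
    using cp_shift[OF y, of "\<eta> *\<^sub>R g y"] by (simp add: P_scale)
  have "norm (closest_point S (x - \<eta> *\<^sub>R g x) - closest_point S (y - \<eta> *\<^sub>R g y))
      \<le> norm ((x - \<eta> *\<^sub>R P (g x)) - (y - \<eta> *\<^sub>R P (g y)))"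
    unfolding eqx eqy using closest_point_lipschitz[OF cvx clo Sne] by (simp add: dist_norm)
  also have "(x - \<eta> *\<^sub>R P (g x)) - (y - \<eta> *\<^sub>R P (g y)) = (1 - \<eta> * l) *\<^sub>R d - \<eta> *\<^sub>R P w"
  proof -
    have "g x - g y = w + l *\<^sub>R d" unfolding w_def d_def dphi_def by (simp add: algebra_simps)
    then have "P (g x) - P (g y) = P w + l *\<^sub>R d" using P_self[OF dV] by (simp add: P_diff[symmetric] P_add P_scale)
    then have pg: "P (g x) - P (g y) = P w + l *\<^sub>R d" .
    have "(x - \<eta> *\<^sub>R P (g x)) - (y - \<eta> *\<^sub>R P (g y)) = d - \<eta> *\<^sub>R (P (g x) - P (g y))"
      by (simp add: d_def algebra_simps)
    also have "\<dots> = d - \<eta> *\<^sub>R (P w + l *\<^sub>R d)" by (simp only: pg)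
    also have "\<dots> = (1 - \<eta> * l) *\<^sub>R d - \<eta> *\<^sub>R P w" by (simp add: algebra_simps)
    finally show ?thesis .
  qed
  also have "norm ((1 - \<eta> * l) *\<^sub>R d - \<eta> *\<^sub>R P w) \<le> (1 - \<eta> * l) * norm d"
  proof (rule power2_le_imp_le)
    have i1: "P w \<bullet> d = W" unfolding W_def by (rule P_inner[OF dV])
    have "(norm ((1 - \<eta> * l) *\<^sub>R d - \<eta> *\<^sub>R P w))\<^sup>2
        = ((1 - \<eta> * l) * norm d)\<^sup>2 - 2 * \<eta> * (1 - \<eta> * l) * W + \<eta>\<^sup>2 * N"
      unfolding N_def nsq_comb i1 by (simp add: power_mult_distrib)
    also have "\<dots> \<le> ((1 - \<eta> * l) * norm d)\<^sup>2"
    proof -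
      have "\<eta> * (\<eta> * N) \<le> \<eta> * (2 * (1 - \<eta> * l) * W)" using key eta by simp
      then show ?thesis by (simp add: power2_eq_square algebra_simps)
    qed
    finally show "(norm ((1 - \<eta> * l) *\<^sub>R d - \<eta> *\<^sub>R P w))\<^sup>2 \<le> ((1 - \<eta> * l) * norm d)\<^sup>2" .
    show "0 \<le> (1 - \<eta> * l) * norm d" using el by simp
  qed
  finally show ?thesis unfolding d_def .
qed

end

theorem theorem3p4:
  fixes S :: "'a::euclidean_space set"
    and f :: "nat \<Rightarrow> 'a \<Rightarrow> real"
    and grad :: "nat \<Rightarrow> 'a \<Rightarrow> 'a"
    and \<theta> \<theta>s :: "nat \<Rightarrow> 'a"
    and T :: nat
    and l u G \<beta> \<gamma> :: real
    and \<eta> :: "nat \<Rightarrow> real"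
  assumes S: "compact S" "convex S"
    and T: "T \<ge> 1"
    and l: "l > 0"
    and diff: "\<And>t x. t \<in> {1..T} \<Longrightarrow> x \<in> S \<Longrightarrow>
                 (f t has_derivative (\<lambda>h. grad t x \<bullet> h)) (at x)"
    and strong: "\<And>t x y. t \<in> {1..T} \<Longrightarrow> x \<in> S \<Longrightarrow> y \<in> S \<Longrightarrow>
                 f t y \<ge> f t x + grad t x \<bullet> (y - x) + l / 2 * (norm (x - y))\<^sup>2"
    and smooth: "\<And>t x y. t \<in> {1..T} \<Longrightarrow> x \<in> S \<Longrightarrow> y \<in> S \<Longrightarrow>
                 norm (grad t x - grad t y) \<le> u * norm (x - y)"
    and bound: "\<And>t x. t \<in> {1..T} \<Longrightarrow> x \<in> S \<Longrightarrow> norm (grad t x) \<le> G"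
    and beta: "0 < \<beta>" "\<beta> < 1"
    and gamma: "1 - \<gamma> = 1 / (real T powr \<beta>)"
    and eta: "\<And>t. \<eta> t = (1 - \<gamma>) / (l * (\<gamma> - \<gamma> ^ t) + u * (1 - \<gamma>))"
    and init: "\<theta> 1 \<in> S"
    and step: "\<And>t. t \<in> {1..<T} \<Longrightarrow>
                 \<theta> (Suc t) = closest_point S (\<theta> t - \<eta> t *\<^sub>R grad t (\<theta> t))"
    and opt: "\<And>t. t \<in> {1..T} \<Longrightarrow> \<theta>s t \<in> S \<and> (\<forall>y\<in>S. f t (\<theta>s t) \<le> f t y)"
  shows "(\<Sum>t=1..T. f t (\<theta> t) - f t (\<theta>s t))
           \<le> G * (2 * (real T powr \<beta> - 1) + u / l)
               * (norm (\<theta> 1 - \<theta>s 1) + (\<Sum>t=2..T. norm (\<theta>s t - \<theta>s (t - 1))))"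
  proof -
  have clo: "closed S" using S(1) compact_imp_closed by blast
  have Sne: "S \<noteq> {}" using init by blast
  have T1: "1 \<in> {1..T}" using T by simp
  have G0: "0 \<le> G" using bound[OF T1 init] norm_ge_zero order_trans by blast
  have thS: "\<theta> t \<in> S" if "t \<in> {1..T}" for t
    using that
  proof (induction t)
    case 0 then show ?case by simp
  next
    case (Suc t)
    show ?case
    proof (cases "t = 0")
      case True then show ?thesis using init by simp
    next
      case False
      then have "t \<in> {1..<T}" using Suc.prems by auto
      then show ?thesis using step closest_point_in_set[OF clo Sne] by simp
    qed
  qed
  have tsS: "\<theta>s t \<in> S" if "t \<in> {1..T}" for t using opt[OF that] by blast
  have tsmin: "\<forall>y\<in>S. f t (\<theta>s t) \<le> f t y" if "t \<in> {1..T}" for t using opt[OF that] by blast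
  have termb: "f t (\<theta> t) - f t (\<theta>s t) \<le> G * norm (\<theta> t - \<theta>s t)" if t: "t \<in> {1..T}" for t
  proof -
    have s: "f t (\<theta>s t) \<ge> f t (\<theta> t) + grad t (\<theta> t) \<bullet> (\<theta>s t - \<theta> t) + l / 2 * (norm (\<theta> t - \<theta>s t))\<^sup>2"
      by (rule strong[OF t thS[OF t] tsS[OF t]])
    have "0 \<le> l / 2 * (norm (\<theta> t - \<theta>s t))\<^sup>2" using l by simp
    moreover have "- (grad t (\<theta> t) \<bullet> (\<theta>s t - \<theta> t)) \<le> norm (grad t (\<theta> t)) * norm (\<theta> t - \<theta>s t)"
    proof -
      have "- (grad t (\<theta> t) \<bullet> (\<theta>s t - \<theta> t)) = grad t (\<theta> t) \<bullet> (\<theta> t - \<theta>s t)"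
        by (simp add: inner_diff_right)
      also have "\<dots> \<le> norm (grad t (\<theta> t)) * norm (\<theta> t - \<theta>s t)" by (rule norm_cauchy_schwarz)
      finally show ?thesis .
    qed
    moreover have "norm (grad t (\<theta> t)) * norm (\<theta> t - \<theta>s t) \<le> G * norm (\<theta> t - \<theta>s t)"
      using bound[OF t thS[OF t]] by (rule mult_right_mono) simp
    ultimately show ?thesis using s by linarith
  qed
  define E where "E = (\<Sum>t=1..T. norm (\<theta> t - \<theta>s t))"
  define Vs where "Vs = (\<Sum>t=2..T. norm (\<theta>s t - \<theta>s (t - 1)))"
  define M where "M = real T powr \<beta> - 1 + u / l"
  have Tb: "1 \<le> real T powr \<beta>" using T beta by (intro ge_one_powr_ge_zero) auto
  have Vs0: "0 \<le> Vs" unfolding Vs_def by (intro sum_nonneg) simp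
  have LHS: "(\<Sum>t=1..T. f t (\<theta> t) - f t (\<theta>s t)) \<le> G * E"
    unfolding E_def sum_distrib_left by (rule sum_mono) (rule termb)
  show ?thesis
  proof (cases "l \<le> u")
    case False
    have same: "x = y" if x: "x \<in> S" and y: "y \<in> S" for x y
    proof -
      have s1: "f 1 y \<ge> f 1 x + grad 1 x \<bullet> (y - x) + l / 2 * (norm (x - y))\<^sup>2" by (rule strong[OF T1 x y])
      have s2: "f 1 x \<ge> f 1 y + grad 1 y \<bullet> (x - y) + l / 2 * (norm (y - x))\<^sup>2" by (rule strong[OF T1 y x])
      have "(grad 1 x - grad 1 y) \<bullet> (x - y) = - (grad 1 x \<bullet> (y - x)) - grad 1 y \<bullet> (x - y)"
        by (simp add: inner_diff_left inner_diff_right)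
      then have a: "l * (norm (x - y))\<^sup>2 \<le> (grad 1 x - grad 1 y) \<bullet> (x - y)"
        using s1 s2 by (simp add: norm_minus_commute)
      have "(grad 1 x - grad 1 y) \<bullet> (x - y) \<le> norm (grad 1 x - grad 1 y) * norm (x - y)" by (rule norm_cauchy_schwarz)
      also have "\<dots> \<le> u * norm (x - y) * norm (x - y)" by (rule mult_right_mono[OF smooth[OF T1 x y]]) simp
      finally have "l * (norm (x - y))\<^sup>2 \<le> u * (norm (x - y))\<^sup>2" using a by (simp add: power2_eq_square mult.assoc)
      then have h: "l * (norm (x - y))\<^sup>2 \<le> u * (norm (x - y))\<^sup>2" .
      have "(norm (x - y))\<^sup>2 \<le> 0"
      proof (rule ccontr)
        assume "\<not> (norm (x - y))\<^sup>2 \<le> 0"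
        then have X: "(norm (x - y))\<^sup>2 > 0" by simp
        have "u * (norm (x - y))\<^sup>2 < l * (norm (x - y))\<^sup>2"
          using False X by (intro mult_strict_right_mono) auto
        with h show False by simp
      qed
      then show ?thesis by simp
    qed
    have "E = 0" unfolding E_def using same thS tsS by (intro sum.neutral) auto
    moreover have "Vs = 0" unfolding Vs_def
    proof (intro sum.neutral ballI)
      fix t assume t: "t \<in> {2..T}"
      then have "t \<in> {1..T}" "t - 1 \<in> {1..T}" by auto
      then show "norm (\<theta>s t - \<theta>s (t - 1)) = 0" using same tsS by simp
    qed
    moreover have "norm (\<theta> 1 - \<theta>s 1) = 0" using same init tsS[OF T1] by simp
    ultimately show ?thesis using LHS unfolding E_def Vs_def by simp
  next
    case True
    obtain c where c: "c \<in> rel_interior S" using rel_interior_eq_empty[OF S(2)] Sne by blast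
    have loc: "scs2 S (f t) (grad t) l u c" if t: "t \<in> {1..T}" for t
      using S(2) diff[OF t] strong[OF t] smooth[OF t] clo True l c
      by (unfold_locales) auto
    define c0 where "c0 = 1 - \<gamma>"
    have c0e: "c0 = 1 / (real T powr \<beta>)" using gamma unfolding c0_def by simp
    have pp: "0 < real T powr \<beta>" using Tb by linarith
    have c0: "0 < c0" "c0 \<le> 1" using pp Tb unfolding c0e by (auto simp: field_simps)
    have ga: "0 \<le> \<gamma>" "\<gamma> < 1" using c0 unfolding c0_def by auto
    have Mdef: "M = \<gamma> / c0 + u / l"
    proof -
      have g1: "\<gamma> = 1 - c0" by (simp add: c0_def)
      have "\<gamma> / c0 = 1 / c0 - 1" using c0 by (simp add: g1 diff_divide_distrib)
      moreover have "1 / c0 = real T powr \<beta>" using pp by (simp add: c0e)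
      ultimately show ?thesis unfolding M_def by simp
    qed
    have M1: "1 \<le> M"
    proof -
      have "1 \<le> u / l" using True l by simp
      moreover have "0 \<le> \<gamma> / c0" using ga c0 by simp
      ultimately show ?thesis unfolding Mdef by simp
    qed
    have etaf: "0 < \<eta> t \<and> \<eta> t * u \<le> 1 \<and> 1 - \<eta> t * l \<le> 1 - 1 / M" if t: "1 \<le> t" for t
    proof -
      define a where "a = \<gamma> - \<gamma> ^ t"
      have "\<gamma> ^ t \<le> \<gamma> ^ 1" using ga t by (intro power_decreasing) auto
      then have a0: "0 \<le> a" unfolding a_def by simp
      have aga: "a \<le> \<gamma>" unfolding a_def using ga by simp
      define D where "D = l * a + u * c0"
      have up: "0 < u" using True l by simp
      have la: "0 \<le> l * a" using a0 l by simp
      have uc: "0 < u * c0" using up c0 by simp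
      have Dp: "u * c0 \<le> D" "0 < D" using la uc unfolding D_def by auto
      have et: "\<eta> t = c0 / D" unfolding eta D_def a_def c0_def ..
      have e1: "0 < \<eta> t" using et Dp c0 by simp
      have e2: "\<eta> t * u \<le> 1"
      proof -
        have "\<eta> t * u = (u * c0) / D" by (simp add: et)
        also have "\<dots> \<le> 1" using Dp by (simp add: divide_le_eq_1)
        finally show ?thesis .
      qed
      have "D / (c0 * l) \<le> M"
      proof -
        have "D / (c0 * l) = a / c0 + u / l" unfolding D_def using c0 l by (simp add: field_simps)
        also have "\<dots> \<le> \<gamma> / c0 + u / l" using aga c0 by (simp add: divide_right_mono)
        finally show ?thesis unfolding Mdef .
      qed
      note le = this
      have q: "0 < D / (c0 * l)" using Dp c0 l by simp
      have Mp: "0 < M" using M1 by simp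
      have "1 / M \<le> 1 / (D / (c0 * l))"
        by (rule divide_left_mono[OF le]) (use mult_pos_pos[OF Mp q] in auto)
      also have "1 / (D / (c0 * l)) = \<eta> t * l" unfolding et by simp
      finally have "1 - \<eta> t * l \<le> 1 - 1 / M" by simp
      then show ?thesis using e1 e2 by simp
    qed
    define e where "e t = norm (\<theta> t - \<theta>s t)" for t
    define v where "v t = norm (\<theta>s t - \<theta>s (t - 1))" for t
    define \<rho> where "\<rho> = 1 - 1 / M"
    have rho0: "0 \<le> \<rho>" using M1 unfolding \<rho>_def by simp
    have rec: "e (Suc t) \<le> \<rho> * e t + v (Suc t)" if t: "t \<in> {1..<T}" for t
    proof -
      have t1: "t \<in> {1..T}" and t2: "Suc t \<in> {1..T}" using t by auto
      note L = loc[OF t1]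
      have ef: "0 < \<eta> t" "\<eta> t * u \<le> 1" "1 - \<eta> t * l \<le> \<rho>" using etaf[of t] t unfolding \<rho>_def by auto
      have fx: "closest_point S (\<theta>s t - \<eta> t *\<^sub>R grad t (\<theta>s t)) = \<theta>s t"
        using scs2.fixed[OF L tsS[OF t1] tsmin[OF t1]] ef(1) by simp
      have "norm (\<theta> (Suc t) - \<theta>s t) \<le> (1 - \<eta> t * l) * norm (\<theta> t - \<theta>s t)"
        using scs2.contraction[OF L thS[OF t1] tsS[OF t1] ef(1) ef(2)] unfolding step[OF t] fx .
      also have "\<dots> \<le> \<rho> * norm (\<theta> t - \<theta>s t)" using ef(3) by (rule mult_right_mono) simp
      finally have a: "norm (\<theta> (Suc t) - \<theta>s t) \<le> \<rho> * e t" unfolding e_def .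
      have "e (Suc t) \<le> norm (\<theta> (Suc t) - \<theta>s t) + norm (\<theta>s t - \<theta>s (Suc t))"
        unfolding e_def by (rule norm_diff_triangle_le[of _ "\<theta>s t"]) simp_all
      also have "norm (\<theta>s t - \<theta>s (Suc t)) = v (Suc t)" unfolding v_def by (simp add: norm_minus_commute)
      finally show ?thesis using a by simp
    qed
    obtain n where n: "T = Suc n" using T by (cases T) auto
    have E1: "E = e 1 + (\<Sum>t=1..n. e (Suc t))"
      unfolding E_def e_def n
      by (rule sum_split1)
    have E2: "E = (\<Sum>t=1..n. e t) + e (Suc n)"
      unfolding E_def e_def n by simp
    have V1: "Vs = (\<Sum>t=1..n. v (Suc t))"
      unfolding Vs_def v_def n
      by (rule sum_split2)
    have "(\<Sum>t=1..n. e (Suc t)) \<le> (\<Sum>t=1..n. \<rho> * e t + v (Suc t))"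
      using rec n by (intro sum_mono) auto
    also have "\<dots> = \<rho> * (\<Sum>t=1..n. e t) + Vs" unfolding V1 by (simp add: sum.distrib sum_distrib_left)
    finally have AB: "(\<Sum>t=1..n. e (Suc t)) \<le> \<rho> * (\<Sum>t=1..n. e t) + Vs" .
    have EA: "E - e 1 = (\<Sum>t=1..n. e (Suc t))" using E1 by simp
    have EB: "E - e (Suc n) = (\<Sum>t=1..n. e t)" using E2 by simp
    have "E - e 1 \<le> \<rho> * (E - e (Suc n)) + Vs" unfolding EA EB by (rule AB)
    moreover have "\<rho> * (E - e (Suc n)) \<le> \<rho> * E" using rho0 by (simp add: e_def mult_left_mono)
    ultimately have "(1 / M) * E \<le> e 1 + Vs" unfolding \<rho>_def by (simp add: algebra_simps)
    then have EM: "E \<le> M * (e 1 + Vs)" using M1 by (simp add: field_simps)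
    have "M \<le> 2 * (real T powr \<beta> - 1) + u / l" unfolding M_def using Tb by simp
    then have "M * (e 1 + Vs) \<le> (2 * (real T powr \<beta> - 1) + u / l) * (e 1 + Vs)"
      using Vs0 by (intro mult_right_mono) (auto simp: e_def)
    with EM have "G * E \<le> G * ((2 * (real T powr \<beta> - 1) + u / l) * (e 1 + Vs))"
      using G0 by (intro mult_left_mono) auto
    with LHS show ?thesis unfolding e_def Vs_def by (simp add: mult.assoc)
  qed
qed

end
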